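(* Let $G$ be a finite simple graph with vertices $v_1,\dots,v_n$ ($n\ge 1$) in which no vertex is adjacent to all other vertices, let $d\ge 1$ be an integer, let $G'$ be the graph constructed from $(G,d)$ as described in the context, and let $h=n(n+1)+d$. Then $G$ has domatic number at least $d$ if and only if $G'$ has Hadwiger number at least $h$.
   Context: A dominating set of $G$ is a set $D$ of vertices such that every vertex of $G$ either lies in $D$ or is adjacent to a vertex of $D$. The domatic number of $G$ is the maximum number of pairwise disjoint dominating sets of $G$. The Hadwiger number of a graph is the largest $h$ such that there exist $h$ pairwise disjoint vertex sets, each inducing a connected subgraph, with an edge between every two of them (equivalently, the largest $h$ such that $K_h$ is a minor). Construction of $G'$ from a graph $G$ with vertices $v_1,\dots,v_n$ and an integer $d$: say $v_i$ dominates $v_j$ if $v_i=v_j$ or $v_iv_j$ is an edge of $G$. The vertex set of $G'$ consists of top vertices $t_1,\dots,t_d$, middle vertices $m_1,\dots,m_n$, and bottom vertices $b_{j,k}$ for $1\le j\le n$, $1\le k\le n+1$. Edges: the top vertices form a clique; the middle vertices form an independent set; the bottom vertices form a clique (of size $n(n+1)$); every top vertex is adjacent to every middle vertex; there are no top–bottom edges; middle vertex $m_i$ is adjacent to bottom vertex $b_{j,k}$ if and only if $v_i$ dominates $v_j$ in $G$. *)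

theory Defs
  imports Main
begin

text \<open>A finite simple graph is given by a finite vertex set V and a symmetric,
irreflexive adjacency relation E (only its restriction to V matters).\<close>

definition simple_graph :: "'a set \<Rightarrow> ('a \<Rightarrow> 'a \<Rightarrow> bool) \<Rightarrow> bool" where
  "simple_graph V E \<longleftrightarrow> finite V \<and> (\<forall>u v. E u v \<longrightarrow> E v u) \<and> (\<forall>v. \<not> E v v)"

definition dominating_set :: "'a set \<Rightarrow> ('a \<Rightarrow> 'a \<Rightarrow> bool) \<Rightarrow> 'a set \<Rightarrow> bool" where
  "dominating_set V E D \<longleftrightarrow> D \<subseteq> V \<and> (\<forall>v\<in>V. v \<in> D \<or> (\<exists>u\<in>D. E u v))"

definition domatic_number :: "'a set \<Rightarrow> ('a \<Rightarrow> 'a \<Rightarrow> bool) \<Rightarrow> nat" where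
  "domatic_number V E = Sup {k. \<exists>D :: nat \<Rightarrow> 'a set.
      (\<forall>i<k. dominating_set V E (D i)) \<and>
      (\<forall>i<k. \<forall>j<k. i \<noteq> j \<longrightarrow> D i \<inter> D j = {})}"

definition induces_connected :: "('a \<Rightarrow> 'a \<Rightarrow> bool) \<Rightarrow> 'a set \<Rightarrow> bool" where
  "induces_connected E S \<longleftrightarrow> S \<noteq> {} \<and>
     (\<forall>u\<in>S. \<forall>v\<in>S. (\<lambda>x y. x \<in> S \<and> y \<in> S \<and> E x y)\<^sup>*\<^sup>* u v)"

definition hadwiger_number :: "'a set \<Rightarrow> ('a \<Rightarrow> 'a \<Rightarrow> bool) \<Rightarrow> nat" where
  "hadwiger_number V E = Sup {h. \<exists>B :: nat \<Rightarrow> 'a set.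
      (\<forall>i<h. B i \<subseteq> V \<and> induces_connected E (B i)) \<and>
      (\<forall>i<h. \<forall>j<h. i \<noteq> j \<longrightarrow> B i \<inter> B j = {}) \<and>
      (\<forall>i<h. \<forall>j<h. i \<noteq> j \<longrightarrow> (\<exists>x\<in>B i. \<exists>y\<in>B j. E x y))}"

text \<open>Construction of G' from G (vertices 0..<n) and d, with 0-based indices:
t_1..t_d = Top 0..Top (d-1); m_1..m_n = Mid 0..Mid (n-1);
b_{j,k} = Bot j k with j < n, k < n+1.\<close>
datatype vtx = Top nat | Mid nat | Bot nat nat

definition dominates :: "(nat \<Rightarrow> nat \<Rightarrow> bool) \<Rightarrow> nat \<Rightarrow> nat \<Rightarrow> bool" where
  "dominates E i j \<longleftrightarrow> i = j \<or> E i j"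

definition G'_verts :: "nat \<Rightarrow> nat \<Rightarrow> vtx set" where
  "G'_verts n d = {Top k | k. k < d} \<union> {Mid i | i. i < n} \<union>
                  {Bot j k | j k. j < n \<and> k < n + 1}"

fun G'_edge :: "(nat \<Rightarrow> nat \<Rightarrow> bool) \<Rightarrow> vtx \<Rightarrow> vtx \<Rightarrow> bool" where
  "G'_edge E (Top a) (Top b) = (a \<noteq> b)"
| "G'_edge E (Top a) (Mid i) = True"
| "G'_edge E (Mid i) (Top a) = True"
| "G'_edge E (Top a) (Bot j k) = False"
| "G'_edge E (Bot j k) (Top a) = False"
| "G'_edge E (Mid i) (Mid i') = False"
| "G'_edge E (Bot j k) (Bot j' k') = ((j, k) \<noteq> (j', k'))"
| "G'_edge E (Mid i) (Bot j k) = dominates E i j"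
| "G'_edge E (Bot j k) (Mid i) = dominates E i j"

end

theory Submission
  imports Defs
begin

lemma count_hit:
  assumes "finite S" "\<forall>i\<in>J. B i \<inter> S \<noteq> {}" "\<forall>i\<in>J. \<forall>j\<in>J. i \<noteq> j \<longrightarrow> B i \<inter> B j = {}"
  shows "card J \<le> card S"
proof -
  define f where "f i = (SOME v. v \<in> B i \<inter> S)" for i
  have f: "f i \<in> B i \<inter> S" if "i \<in> J" for i
    using assms(2) that unfolding f_def by (metis some_in_eq)
  have "inj_on f J"
  proof (rule inj_onI)
    fix i j assume ij: "i \<in> J" "j \<in> J" "f i = f j"
    show "i = j"
    proof (rule ccontr)
      assume "i \<noteq> j"
      then have "B i \<inter> B j = {}" using assms(3) ij by blast
      moreover have "f i \<in> B i" "f i \<in> B j" using f[OF ij(1)] f[OF ij(2)] ij(3) by auto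
      ultimately show False by blast
    qed
  qed
  moreover have "f ` J \<subseteq> S" using f by blast
  ultimately show ?thesis using card_inj_on_le assms(1) by blast
qed

lemma sup_ge_iff:
  fixes K :: "nat set"
  assumes "0 \<in> K" "\<forall>k\<in>K. k \<le> N"
  shows "d \<le> Sup K \<longleftrightarrow> (\<exists>k\<in>K. d \<le> k)"
proof -
  have fin: "finite K" using assms(2) by (meson finite_nat_set_iff_bounded_le)
  have "Sup K = Max K" using cSup_eq_Max[OF fin] assms(1) by blast
  then show ?thesis using Max_ge_iff[OF fin] assms(1) by auto
qed

lemma G'_verts_eq: "G'_verts n d = Top ` {0..<d} \<union> Mid ` {0..<n} \<union> (\<lambda>(a,b). Bot a b) ` ({0..<n} \<times> {0..<Suc n})"
  unfolding G'_verts_def by auto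

lemma finite_V: "finite (G'_verts n d)" unfolding G'_verts_eq by auto

lemma card_bots: "finite A \<Longrightarrow> card ((\<lambda>(a,b). Bot a b) ` (A \<times> {0..<Suc n})) \<le> card A * Suc n"
  using card_image_le[of "A \<times> {0..<Suc n}" "\<lambda>(a,b). Bot a b"] by (simp add: card_cartesian_product)


lemma forward:
  fixes E :: "nat \<Rightarrow> nat \<Rightarrow> bool" and n d :: nat
  assumes dom: "\<forall>i<d. dominating_set {0..<n} E (D i)"
    and disj: "\<forall>i<d. \<forall>j<d. i \<noteq> j \<longrightarrow> D i \<inter> D j = {}"
  shows "\<exists>B :: nat \<Rightarrow> vtx set.
      (\<forall>i<n * (n + 1) + d. B i \<subseteq> G'_verts n d \<and> induces_connected (G'_edge E) (B i)) \<and>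
      (\<forall>i<n * (n + 1) + d. \<forall>j<n * (n + 1) + d. i \<noteq> j \<longrightarrow> B i \<inter> B j = {}) \<and>
      (\<forall>i<n * (n + 1) + d. \<forall>j<n * (n + 1) + d. i \<noteq> j \<longrightarrow> (\<exists>x\<in>B i. \<exists>y\<in>B j. G'_edge E x y))"
proof -
  define r where "r i = (i - d) div (n+1)" for i
  define c where "c i = (i - d) mod (n+1)" for i
  define B where "B i = (if i < d then insert (Top i) (Mid ` D i) else {Bot (r i) (c i)})" for i
  have Dsub: "D i \<subseteq> {0..<n}" if "i < d" for i using dom that unfolding dominating_set_def by blast
  have rlt: "r i < n" if "i < n * (n + 1) + d" "\<not> i < d" for i
    unfolding r_def using that by (simp add: div_less_iff_less_mult)
  have clt: "c i < n + 1" for i unfolding c_def by simp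
  have rc_inj: "i = j" if "\<not> i < d" "\<not> j < d" "r i = r j" "c i = c j" for i j
  proof -
    have "i - d = r i * (n+1) + c i" "j - d = r j * (n+1) + c j" unfolding r_def c_def by (simp_all only: div_mult_mod_eq)
    then have "i - d = j - d" using that by simp
    then show ?thesis using that by simp
  qed
  have P1: "B i \<subseteq> G'_verts n d \<and> induces_connected (G'_edge E) (B i)" if "i < n * (n + 1) + d" for i
  proof (cases "i < d")
    case True
    have sub: "B i \<subseteq> G'_verts n d" using True Dsub[OF True] unfolding B_def G'_verts_def by auto
    let ?S = "B i"
    let ?R = "\<lambda>x y. x \<in> ?S \<and> y \<in> ?S \<and> G'_edge E x y"
    have toT: "?R\<^sup>*\<^sup>* u (Top i)" if "u \<in> ?S" for u
    proof -
      have "u = Top i \<or> (\<exists>p. u = Mid p)" using that True unfolding B_def by auto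
      then show ?thesis
      proof
        assume "u = Top i" then show ?thesis by simp
      next
        assume "\<exists>p. u = Mid p"
        then obtain p where "u = Mid p" by blast
        then have "?R u (Top i)" using that True unfolding B_def by auto
        then show ?thesis by blast
      qed
    qed
    have fromT: "?R\<^sup>*\<^sup>* (Top i) u" if "u \<in> ?S" for u
    proof -
      have "u = Top i \<or> (\<exists>p. u = Mid p)" using that True unfolding B_def by auto
      then show ?thesis
      proof
        assume "u = Top i" then show ?thesis by simp
      next
        assume "\<exists>p. u = Mid p"
        then obtain p where "u = Mid p" by blast
        then have "?R (Top i) u" using that True unfolding B_def by auto
        then show ?thesis by blast
      qed
    qed
    have "induces_connected (G'_edge E) ?S"
      unfolding induces_connected_def
    proof (intro conjI ballI)
      show "?S \<noteq> {}" by (simp add: B_def True)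
      fix u v assume "u \<in> ?S" "v \<in> ?S"
      show "?R\<^sup>*\<^sup>* u v" using rtranclp_trans[OF toT[OF \<open>u \<in> ?S\<close>] fromT[OF \<open>v \<in> ?S\<close>]] .
    qed
    then show ?thesis using sub by blast
  next
    case False
    have "B i = {Bot (r i) (c i)}" using False unfolding B_def by simp
    moreover have "Bot (r i) (c i) \<in> G'_verts n d" using rlt[OF that False] clt unfolding G'_verts_def by auto
    ultimately show ?thesis unfolding induces_connected_def by auto
  qed
  have P2: "B i \<inter> B j = {}" if "i \<noteq> j" for i j
  proof (cases "i < d")
    case True
    then show ?thesis
    proof (cases "j < d")
      case True
      then show ?thesis using \<open>i < d\<close> disj that unfolding B_def by auto
    next
      case False
      then show ?thesis using \<open>i < d\<close> unfolding B_def by auto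
    qed
  next
    case False
    then show ?thesis
    proof (cases "j < d")
      case True
      then show ?thesis using \<open>\<not> i < d\<close> unfolding B_def by auto
    next
      case False
      then show ?thesis using \<open>\<not> i < d\<close> that rc_inj unfolding B_def by auto
    qed
  qed
  have domj: "\<exists>x\<in>B i. \<exists>y\<in>B j. G'_edge E x y \<and> G'_edge E y x" if "i < d" "\<not> j < d" "j < n * (n + 1) + d" for i j
  proof -
    have "r j < n" using rlt that by blast
    then have "r j \<in> D i \<or> (\<exists>u\<in>D i. E u (r j))" using dom \<open>i < d\<close> unfolding dominating_set_def by auto
    then obtain p where "p \<in> D i" "dominates E p (r j)" unfolding dominates_def by blast
    then show ?thesis using that unfolding B_def by auto
  qed
  have P3: "\<exists>x\<in>B i. \<exists>y\<in>B j. G'_edge E x y" if "i \<noteq> j" "i < n * (n + 1) + d" "j < n * (n + 1) + d" for i j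
  proof (cases "i < d")
    case True
    then show ?thesis
    proof (cases "j < d")
      case True
      then show ?thesis using \<open>i < d\<close> that unfolding B_def by auto
    next
      case False
      then show ?thesis using domj \<open>i < d\<close> that by blast
    qed
  next
    case False
    then show ?thesis
    proof (cases "j < d")
      case True
      then show ?thesis using domj[of j i] \<open>\<not> i < d\<close> that by blast
    next
      case False
      then show ?thesis using \<open>\<not> i < d\<close> that rc_inj unfolding B_def by auto
    qed
  qed
  show ?thesis
    apply (rule exI[of _ B])
    using P1 P2 P3 by blast
qed


lemma arith1: "n \<ge> 1 \<Longrightarrow> d + n + (n - 1) * Suc n < n * (n + 1) + (d::nat)"
  by (cases n) (auto simp: algebra_simps)

lemma backward:
  fixes E :: "nat \<Rightarrow> nat \<Rightarrow> bool" and n d h :: nat and B :: "nat \<Rightarrow> vtx set"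
  assumes n1: "n \<ge> 1"
   and Bsub: "\<forall>i<h. B i \<subseteq> G'_verts n d \<and> induces_connected (G'_edge E) (B i)"
   and disj: "\<forall>i<h. \<forall>j<h. i\<noteq>j \<longrightarrow> B i \<inter> B j = {}"
   and adj: "\<forall>i<h. \<forall>j<h. i\<noteq>j \<longrightarrow> (\<exists>x\<in>B i. \<exists>y\<in>B j. G'_edge E x y)"
   and h: "h = n*(n+1)+d"
  shows "\<exists>D. (\<forall>i<d. dominating_set {0..<n} E (D i)) \<and> (\<forall>i<d. \<forall>j<d. i\<noteq>j \<longrightarrow> D i \<inter> D j = {})"
proof -
  define Bots where "Bots = (\<lambda>(a,b). Bot a b) ` ({0..<n} \<times> {0..<Suc n})"
  define P where "P = {i. i<h \<and> B i \<inter> Bots = {}}"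
  have ne: "B i \<noteq> {}" if "i < h" for i using Bsub that unfolding induces_connected_def by blast
  have Vsub: "B i \<subseteq> G'_verts n d" if "i < h" for i using Bsub that by blast
  have "card ({0..<h} - P) \<le> card Bots"
  proof (rule count_hit)
    show "finite Bots" unfolding Bots_def by simp
    show "\<forall>i\<in>{0..<h} - P. B i \<inter> Bots \<noteq> {}" unfolding P_def by auto
    show "\<forall>i\<in>{0..<h} - P. \<forall>j\<in>{0..<h} - P. i \<noteq> j \<longrightarrow> B i \<inter> B j = {}" using disj by auto
  qed
  also have "\<dots> \<le> n * Suc n" unfolding Bots_def using card_bots[of "{0..<n}" n] by simp
  finally have c1: "card ({0..<h} - P) \<le> n * Suc n" .
  have "h \<le> card P + card ({0..<h} - P)"
  proof -
    have "{0..<h} = P \<union> ({0..<h} - P)" unfolding P_def by auto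
    then have "card {0..<h} \<le> card P + card ({0..<h} - P)" by (metis card_Un_le)
    then show ?thesis by simp
  qed
  then have cP: "d \<le> card P" using c1 h by simp
  have finP: "finite P" unfolding P_def by simp
  have claim: "\<exists>p. Mid p \<in> B i \<and> dominates E p j" if "i \<in> P" "j < n" for i j
  proof (rule ccontr)
    assume nd: "\<not> (\<exists>p. Mid p \<in> B i \<and> dominates E p j)"
    have ih: "i < h" "B i \<inter> Bots = {}" using that unfolding P_def by auto
    define S where "S = Top ` {0..<d} \<union> Mid ` {0..<n} \<union> (\<lambda>(a,b). Bot a b) ` (({0..<n} - {j}) \<times> {0..<Suc n})"
    have finS: "finite S" unfolding S_def by auto
    have "card S \<le> card (Top ` {0..<d} \<union> Mid ` {0..<n}) + card ((\<lambda>(a,b). Bot a b) ` (({0..<n} - {j}) \<times> {0..<Suc n}))"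
      unfolding S_def by (rule card_Un_le)
    also have "\<dots> \<le> (card (Top ` {0..<d}) + card (Mid ` {0..<n})) + (n - 1) * Suc n"
      using card_Un_le[of "Top ` {0..<d}" "Mid ` {0..<n}"] card_bots[of "{0..<n} - {j}" n] that(2)
      by simp
    also have "\<dots> \<le> d + n + (n - 1) * Suc n"
      using card_image_le[of "{0..<d}" Top] card_image_le[of "{0..<n}" Mid] by simp
    finally have cS: "card S < h" using arith1[OF n1, of d] h by simp
    have VS: "v \<in> S \<or> (\<exists>k. v = Bot j k)" if "v \<in> G'_verts n d" for v
      using that unfolding S_def G'_verts_def by auto
    have VB: "v \<in> Bots" if "v \<in> G'_verts n d" "v = Bot a b" for v a b
      using that unfolding Bots_def G'_verts_def by auto
    have hit: "\<forall>i'\<in>{0..<h}. B i' \<inter> S \<noteq> {}"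
    proof
      fix i' assume i': "i' \<in> {0..<h}"
      show "B i' \<inter> S \<noteq> {}"
      proof (cases "i' = i")
        case True
        obtain v where v: "v \<in> B i" using ne[OF ih(1)] by blast
        have "v \<in> G'_verts n d" using v Vsub[OF ih(1)] by blast
        moreover have "v \<notin> Bots" using v ih(2) by blast
        ultimately have "v \<in> S" using VS VB by blast
        then show ?thesis using v True by blast
      next
        case False
        then obtain x y where xy: "x \<in> B i" "y \<in> B i'" "G'_edge E x y" using adj ih(1) i' by force
        have xV: "x \<in> G'_verts n d" using xy Vsub[OF ih(1)] by blast
        have xnb: "x \<notin> Bots" using xy ih(2) by blast
        have "y \<in> S"
        proof (rule ccontr)
          assume "y \<notin> S"
          then obtain k where yk: "y = Bot j k" using VS Vsub i' xy by fastforce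
          show False
          proof (cases x)
            case (Top a) then show ?thesis using xy yk by simp
          next
            case (Mid p) then show ?thesis using xy yk nd by simp
          next
            case (Bot a b) then show ?thesis using xV xnb VB by blast
          qed
        qed
        then show ?thesis using xy by blast
      qed
    qed
    have "card {0..<h} \<le> card S"
      by (rule count_hit[OF finS hit]) (use disj in auto)
    then show False using cS by simp
  qed
  obtain P' where P': "P' \<subseteq> P" "card P' = d" "finite P'" using obtain_subset_with_card_n[OF cP] by blast
  obtain f where f: "bij_betw f {0..<d} P'" using ex_bij_betw_nat_finite[OF P'(3)] P'(2) by auto
  define D where "D a = {p. Mid p \<in> B (f a)}" for a
  have fP: "f a \<in> P" if "a < d" for a using f P'(1) that unfolding bij_betw_def by auto
  have "\<forall>i<d. dominating_set {0..<n} E (D i)"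
  proof (intro allI impI)
    fix a assume a: "a < d"
    have fa: "f a \<in> P" "f a < h" using fP[OF a] unfolding P_def by auto
    have sub: "D a \<subseteq> {0..<n}" using Vsub[OF fa(2)] unfolding D_def G'_verts_def by auto
    have "v \<in> D a \<or> (\<exists>u\<in>D a. E u v)" if "v \<in> {0..<n}" for v
      using claim[OF fa(1), of v] that unfolding D_def dominates_def by auto
    then show "dominating_set {0..<n} E (D a)" unfolding dominating_set_def using sub by blast
  qed
  moreover have "\<forall>i<d. \<forall>j<d. i\<noteq>j \<longrightarrow> D i \<inter> D j = {}"
  proof (intro allI impI)
    fix a b assume ab: "a < d" "b < d" "a \<noteq> b"
    have "f a \<noteq> f b" using f ab unfolding bij_betw_def inj_on_def by auto
    moreover have "f a < h" "f b < h" using fP ab unfolding P_def by auto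
    ultimately have "B (f a) \<inter> B (f b) = {}" using disj by blast
    then show "D a \<inter> D b = {}" unfolding D_def by auto
  qed
  ultimately show ?thesis by blast
qed


theorem lemma6:
  fixes E :: "nat \<Rightarrow> nat \<Rightarrow> bool" and n d :: nat
  assumes "simple_graph {0..<n} E"
    and "n \<ge> 1"
    and "\<forall>i<n. \<exists>j<n. j \<noteq> i \<and> \<not> E i j"
    and "d \<ge> 1"
  shows "domatic_number {0..<n} E \<ge> d \<longleftrightarrow>
         hadwiger_number (G'_verts n d) (G'_edge E) \<ge> n * (n + 1) + d"
proof -
  define Kd where "Kd = {k. \<exists>D :: nat \<Rightarrow> nat set.
      (\<forall>i<k. dominating_set {0..<n} E (D i)) \<and>
      (\<forall>i<k. \<forall>j<k. i \<noteq> j \<longrightarrow> D i \<inter> D j = {})}"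
  define Kh where "Kh = {h. \<exists>B :: nat \<Rightarrow> vtx set.
      (\<forall>i<h. B i \<subseteq> G'_verts n d \<and> induces_connected (G'_edge E) (B i)) \<and>
      (\<forall>i<h. \<forall>j<h. i \<noteq> j \<longrightarrow> B i \<inter> B j = {}) \<and>
      (\<forall>i<h. \<forall>j<h. i \<noteq> j \<longrightarrow> (\<exists>x\<in>B i. \<exists>y\<in>B j. G'_edge E x y))}"
  have dn: "domatic_number {0..<n} E = Sup Kd" unfolding domatic_number_def Kd_def by simp
  have hn: "hadwiger_number (G'_verts n d) (G'_edge E) = Sup Kh" unfolding hadwiger_number_def Kh_def by simp
  have Kd0: "0 \<in> Kd" unfolding Kd_def by simp
  have Kh0: "0 \<in> Kh" unfolding Kh_def by simp
  have Kdb: "\<forall>k\<in>Kd. k \<le> n"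
  proof
    fix k assume "k \<in> Kd"
    then obtain D :: "nat \<Rightarrow> nat set" where D: "\<forall>i<k. dominating_set {0..<n} E (D i)"
      "\<forall>i<k. \<forall>j<k. i \<noteq> j \<longrightarrow> D i \<inter> D j = {}" unfolding Kd_def by blast
    have "card {0..<k} \<le> card {0..<n}"
    proof (rule count_hit)
      show "\<forall>i\<in>{0..<k}. D i \<inter> {0..<n} \<noteq> {}"
      proof
        fix i assume "i \<in> {0..<k}"
        then have "dominating_set {0..<n} E (D i)" using D by simp
        then have "D i \<subseteq> {0..<n}" "0 \<in> D i \<or> (\<exists>u\<in>D i. E u 0)"
          using assms(2) unfolding dominating_set_def by auto
        then show "D i \<inter> {0..<n} \<noteq> {}" by blast
      qed
      show "\<forall>i\<in>{0..<k}. \<forall>j\<in>{0..<k}. i \<noteq> j \<longrightarrow> D i \<inter> D j = {}" using D(2) by simp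
    qed simp
    then show "k \<le> n" by simp
  qed
  have Khb: "\<forall>k\<in>Kh. k \<le> card (G'_verts n d)"
  proof
    fix k assume "k \<in> Kh"
    then obtain B :: "nat \<Rightarrow> vtx set" where B: "\<forall>i<k. B i \<subseteq> G'_verts n d \<and> induces_connected (G'_edge E) (B i)"
      "\<forall>i<k. \<forall>j<k. i \<noteq> j \<longrightarrow> B i \<inter> B j = {}" unfolding Kh_def by blast
    have "card {0..<k} \<le> card (G'_verts n d)"
    proof (rule count_hit)
      show "finite (G'_verts n d)" by (rule finite_V)
      show "\<forall>i\<in>{0..<k}. B i \<inter> G'_verts n d \<noteq> {}"
      proof
        fix i assume "i \<in> {0..<k}"
        then have "B i \<subseteq> G'_verts n d" "B i \<noteq> {}" using B(1) unfolding induces_connected_def by auto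
        then show "B i \<inter> G'_verts n d \<noteq> {}" by blast
      qed
      show "\<forall>i\<in>{0..<k}. \<forall>j\<in>{0..<k}. i \<noteq> j \<longrightarrow> B i \<inter> B j = {}" using B(2) by simp
    qed
    then show "k \<le> card (G'_verts n d)" by simp
  qed
  have dK: "d \<le> Sup Kd \<longleftrightarrow> d \<in> Kd"
  proof
    assume "d \<le> Sup Kd"
    then obtain k where "k \<in> Kd" "d \<le> k" using sup_ge_iff[OF Kd0 Kdb] by blast
    then obtain D :: "nat \<Rightarrow> nat set" where D: "\<forall>i<k. dominating_set {0..<n} E (D i)"
      "\<forall>i<k. \<forall>j<k. i \<noteq> j \<longrightarrow> D i \<inter> D j = {}" "d \<le> k" unfolding Kd_def by blast
    have "(\<forall>i<d. dominating_set {0..<n} E (D i)) \<and> (\<forall>i<d. \<forall>j<d. i \<noteq> j \<longrightarrow> D i \<inter> D j = {})"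
      using D by auto
    then show "d \<in> Kd" unfolding Kd_def by blast
  next
    assume "d \<in> Kd" then show "d \<le> Sup Kd" using sup_ge_iff[OF Kd0 Kdb] by blast
  qed
  have hK: "n * (n + 1) + d \<le> Sup Kh \<longleftrightarrow> n * (n + 1) + d \<in> Kh"
  proof
    assume "n * (n + 1) + d \<le> Sup Kh"
    then obtain k where "k \<in> Kh" "n * (n + 1) + d \<le> k" using sup_ge_iff[OF Kh0 Khb] by blast
    then obtain B :: "nat \<Rightarrow> vtx set" where B: "\<forall>i<k. B i \<subseteq> G'_verts n d \<and> induces_connected (G'_edge E) (B i)"
      "\<forall>i<k. \<forall>j<k. i \<noteq> j \<longrightarrow> B i \<inter> B j = {}"
      "\<forall>i<k. \<forall>j<k. i \<noteq> j \<longrightarrow> (\<exists>x\<in>B i. \<exists>y\<in>B j. G'_edge E x y)"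
      "n * (n + 1) + d \<le> k" unfolding Kh_def by blast
    have "(\<forall>i<n * (n + 1) + d. B i \<subseteq> G'_verts n d \<and> induces_connected (G'_edge E) (B i)) \<and>
      (\<forall>i<n * (n + 1) + d. \<forall>j<n * (n + 1) + d. i \<noteq> j \<longrightarrow> B i \<inter> B j = {}) \<and>
      (\<forall>i<n * (n + 1) + d. \<forall>j<n * (n + 1) + d. i \<noteq> j \<longrightarrow> (\<exists>x\<in>B i. \<exists>y\<in>B j. G'_edge E x y))"
      using B(1,2,3) B(4) by (meson order_less_le_trans)
    then show "n * (n + 1) + d \<in> Kh" unfolding Kh_def by blast
  next
    assume "n * (n + 1) + d \<in> Kh" then show "n * (n + 1) + d \<le> Sup Kh" using sup_ge_iff[OF Kh0 Khb] by blast
  qed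
  have "d \<in> Kd \<longleftrightarrow> n * (n + 1) + d \<in> Kh"
  proof
    assume "d \<in> Kd"
    then obtain D :: "nat \<Rightarrow> nat set" where D: "\<forall>i<d. dominating_set {0..<n} E (D i)"
      "\<forall>i<d. \<forall>j<d. i \<noteq> j \<longrightarrow> D i \<inter> D j = {}" unfolding Kd_def by blast
    show "n * (n + 1) + d \<in> Kh" unfolding Kh_def using forward[OF D] by simp
  next
    assume "n * (n + 1) + d \<in> Kh"
    then obtain B :: "nat \<Rightarrow> vtx set" where B:
      "\<forall>i<n * (n + 1) + d. B i \<subseteq> G'_verts n d \<and> induces_connected (G'_edge E) (B i)"
      "\<forall>i<n * (n + 1) + d. \<forall>j<n * (n + 1) + d. i \<noteq> j \<longrightarrow> B i \<inter> B j = {}"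
      "\<forall>i<n * (n + 1) + d. \<forall>j<n * (n + 1) + d. i \<noteq> j \<longrightarrow> (\<exists>x\<in>B i. \<exists>y\<in>B j. G'_edge E x y)"
      unfolding Kh_def by blast
    show "d \<in> Kd" unfolding Kd_def using backward[OF assms(2) B refl] by simp
  qed
  then show ?thesis using dn hn dK hK by simp
qed

end
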